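(* Let $F:\mathbb{R}^n\rightrightarrows\mathbb{R}^n$ be continuous with $F(x)$ nonempty, compact and convex for all $x$, and consider $\Sigma:\dot x\in F(x)$. Let $O\subset\mathbb{R}^n$ be open and $B:\mathbb{R}^n\to\mathbb{R}$ continuously differentiable. If along each (not necessarily maximal) solution $\phi$ of $\Sigma$ with $\phi(\mathrm{dom}\,\phi)\subset O$ the map $t\mapsto B(\phi(t))$ is nonincreasing, then $$\langle\nabla B(x),\eta\rangle\le0\qquad\forall\eta\in F(x),\ \forall x\in O.$$
   Context: Continuity of a set-valued map means upper and lower semicontinuity. A solution of $\Sigma$ is a locally absolutely continuous function $\phi$ on an interval containing $0$ with $\dot\phi(t)\in F(\phi(t))$ for almost all $t\in\mathrm{dom}\,\phi$. *)

theory Defs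
  imports "HOL-Analysis.Analysis"
begin

definition absolutely_continuous_on :: "real set \<Rightarrow> (real \<Rightarrow> 'a::real_normed_vector) \<Rightarrow> bool" where
  "absolutely_continuous_on S f \<longleftrightarrow>
     (\<forall>e>0. \<exists>d>0. \<forall>D. finite D \<and> (\<forall>(u,v)\<in>D. u \<le> v \<and> {u..v} \<subseteq> S) \<and>
        (\<forall>p\<in>D. \<forall>q\<in>D. p \<noteq> q \<longrightarrow> {fst p<..<snd p} \<inter> {fst q<..<snd q} = {}) \<and>
        (\<Sum>(u,v)\<in>D. v - u) < d
        \<longrightarrow> (\<Sum>(u,v)\<in>D. norm (f v - f u)) < e)"

definition locally_absolutely_continuous_on :: "real set \<Rightarrow> (real \<Rightarrow> 'a::real_normed_vector) \<Rightarrow> bool" where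
  "locally_absolutely_continuous_on I f \<longleftrightarrow>
     (\<forall>a b. {a..b} \<subseteq> I \<longrightarrow> absolutely_continuous_on {a..b} f)"

definition upper_semicontinuous_map :: "('a::metric_space \<Rightarrow> 'b::topological_space set) \<Rightarrow> bool" where
  "upper_semicontinuous_map F \<longleftrightarrow>
     (\<forall>x U. open U \<and> F x \<subseteq> U \<longrightarrow> (\<exists>d>0. \<forall>y. dist y x < d \<longrightarrow> F y \<subseteq> U))"

definition lower_semicontinuous_map :: "('a::metric_space \<Rightarrow> 'b::topological_space set) \<Rightarrow> bool" where
  "lower_semicontinuous_map F \<longleftrightarrow>
     (\<forall>x U. open U \<and> F x \<inter> U \<noteq> {} \<longrightarrow> (\<exists>d>0. \<forall>y. dist y x < d \<longrightarrow> F y \<inter> U \<noteq> {}))"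

definition continuous_set_valued_map :: "('a::metric_space \<Rightarrow> 'b::topological_space set) \<Rightarrow> bool" where
  "continuous_set_valued_map F \<longleftrightarrow> upper_semicontinuous_map F \<and> lower_semicontinuous_map F"

definition is_solution :: "('a::euclidean_space \<Rightarrow> 'a set) \<Rightarrow> real set \<Rightarrow> (real \<Rightarrow> 'a) \<Rightarrow> bool" where
  "is_solution F I \<phi> \<longleftrightarrow>
     is_interval I \<and> 0 \<in> I \<and> locally_absolutely_continuous_on I \<phi> \<and>
     (AE t in lebesgue. t \<in> I \<longrightarrow> (\<exists>v. (\<phi> has_vector_derivative v) (at t) \<and> v \<in> F (\<phi> t)))"

end

theory Submission
  imports Defs "HOL-Complex_Analysis.Great_Picard"
begin


lemma sum_clamp:
  fixes h t :: real
  assumes "h > 0" "t \<ge> 0"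
  shows "(\<Sum>i<n. max 0 (min h (t - real i * h))) = min t (real n * h)"
proof (induction n)
  case 0 then show ?case using assms by simp
next
  case (Suc n)
  show ?case
  proof (cases "t \<le> real n * h")
    case True
    then show ?thesis using Suc assms by (auto simp: min_def max_def algebra_simps)
  next
    case False
    then show ?thesis using Suc assms by (auto simp: min_def max_def algebra_simps)
  qed
qed

lemma clamp_mono:
  fixes h :: real
  assumes "s \<le> t"
  shows "max 0 (min h (s - a)) \<le> max 0 (min h (t - a))"
  using assms by (auto simp: min_def max_def)

lemma clamp_at_node:
  fixes h :: real
  assumes "h > 0"
  shows "max 0 (min h (real j * h - real i * h)) = (if i < j then h else 0)"
proof (cases "i < j")
  case True
  then have "real j * h - real i * h = real (j - i) * h" by (simp add: of_nat_diff algebra_simps)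
  moreover have "real (j - i) * h \<ge> 1 * h" using True assms
    by (intro mult_right_mono) auto
  ultimately show ?thesis using True assms by auto
next
  case False
  then have "real j * h \<le> real i * h" using assms by (intro mult_right_mono) auto
  then show ?thesis using False by auto
qed



lemma polygon:
  fixes f :: "'a::euclidean_space \<Rightarrow> 'a" and x :: 'a and N :: nat and y :: "nat \<Rightarrow> 'a" and \<phi> :: "real \<Rightarrow> 'a"
  assumes bnd: "\<forall>z. norm (f z) \<le> M" and h: "h > 0"
  assumes y_def: "y = (\<lambda>j. ((\<lambda>z. z + h *\<^sub>R f z) ^^ j) x)"
  assumes \<phi>_def: "\<phi> = (\<lambda>t. x + (\<Sum>i<N. max 0 (min h (t - real i * h)) *\<^sub>R f (y i)))"
  shows polygon_0: "\<phi> 0 = x"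
    and polygon_node: "j \<le> N \<Longrightarrow> \<phi> (real j * h) = y j"
    and polygon_lip: "0 \<le> s \<Longrightarrow> s \<le> t \<Longrightarrow> t \<le> real N * h \<Longrightarrow> norm (\<phi> t - \<phi> s) \<le> M * (t - s)"
    and polygon_lin: "0 \<le> a \<Longrightarrow> a \<le> b \<Longrightarrow> b \<le> real N * h \<Longrightarrow>
       (\<forall>i<N. a - h < real i * h \<and> real i * h < b \<longrightarrow> norm (f (y i) - v) \<le> e) \<Longrightarrow>
       norm (\<phi> b - \<phi> a - (b - a) *\<^sub>R v) \<le> e * (b - a)"
proof -
  define c where "c = (\<lambda>i t. max 0 (min h (t - real i * h)))"
  have phi_c: "\<phi> t = x + (\<Sum>i<N. c i t *\<^sub>R f (y i))" for t
    by (simp add: \<phi>_def c_def)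
  have c0: "c i 0 = 0" for i
  proof -
    have "0 \<le> real i * h" using h by simp
    then have "min h (0 - real i * h) \<le> 0" by linarith
    then show ?thesis unfolding c_def by (simp only: max_absorb1)
  qed
  show "\<phi> 0 = x" by (simp add: phi_c c0)
  have ysum: "y j = x + (\<Sum>i<j. h *\<^sub>R f (y i))" for j
    by (induction j) (simp_all add: y_def)
  show "\<phi> (real j * h) = y j" if "j \<le> N"
  proof -
    have "(\<Sum>i<N. c i (real j * h) *\<^sub>R f (y i)) = (\<Sum>i<N. if i < j then h *\<^sub>R f (y i) else 0)"
      by (rule sum.cong) (simp_all add: c_def clamp_at_node[OF h])
    also have "\<dots> = (\<Sum>i\<in>{i\<in>{..<N}. i < j}. h *\<^sub>R f (y i))"
      by (rule sum.inter_filter[symmetric]) simp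
    also have "{i\<in>{..<N}. i < j} = {..<j}" using that by auto
    finally show ?thesis by (simp add: phi_c ysum[of j])
  qed
  have csum: "(\<Sum>i<N. c i t) = t" if "0 \<le> t" "t \<le> real N * h" for t
    using sum_clamp[OF h that(1), of N] that by (simp add: c_def)
  have cmono: "c i s \<le> c i t" if "s \<le> t" for i s t
    unfolding c_def using clamp_mono[OF that] .
  have diff: "\<phi> t - \<phi> s = (\<Sum>i<N. (c i t - c i s) *\<^sub>R f (y i))" for s t
    by (simp add: phi_c sum_subtractf scaleR_diff_left)
  have dsum: "(\<Sum>i<N. c i t - c i s) = t - s" if "0 \<le> s" "s \<le> t" "t \<le> real N * h" for s t
    using csum[of t] csum[of s] that by (simp add: sum_subtractf)
  show "norm (\<phi> t - \<phi> s) \<le> M * (t - s)" if "0 \<le> s" "s \<le> t" "t \<le> real N * h"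
  proof -
    have "norm (\<phi> t - \<phi> s) \<le> (\<Sum>i<N. norm ((c i t - c i s) *\<^sub>R f (y i)))"
      unfolding diff by (rule norm_sum)
    also have "\<dots> \<le> (\<Sum>i<N. (c i t - c i s) * M)"
    proof (rule sum_mono)
      fix i
      have "0 \<le> c i t - c i s" using cmono[OF that(2)] by simp
      then show "norm ((c i t - c i s) *\<^sub>R f (y i)) \<le> (c i t - c i s) * M"
        using bnd by (simp add: mult_left_mono)
    qed
    also have "\<dots> = M * (t - s)"
      by (metis dsum[OF that] sum_distrib_right mult.commute)
    finally show ?thesis .
  qed
  show "norm (\<phi> b - \<phi> a - (b - a) *\<^sub>R v) \<le> e * (b - a)"
    if ab: "0 \<le> a" "a \<le> b" "b \<le> real N * h"
      and hyp: "\<forall>i<N. a - h < real i * h \<and> real i * h < b \<longrightarrow> norm (f (y i) - v) \<le> e"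
  proof -
    have "(b - a) *\<^sub>R v = (\<Sum>i<N. (c i b - c i a) *\<^sub>R v)"
      using dsum[OF ab] by (simp add: scaleR_sum_left[symmetric])
    then have eq: "\<phi> b - \<phi> a - (b - a) *\<^sub>R v = (\<Sum>i<N. (c i b - c i a) *\<^sub>R (f (y i) - v))"
      by (simp add: diff sum_subtractf[symmetric] scaleR_diff_right)
    have "norm (\<phi> b - \<phi> a - (b - a) *\<^sub>R v) \<le> (\<Sum>i<N. norm ((c i b - c i a) *\<^sub>R (f (y i) - v)))"
      unfolding eq by (rule norm_sum)
    also have "\<dots> \<le> (\<Sum>i<N. (c i b - c i a) * e)"
    proof (rule sum_mono)
      fix i assume "i \<in> {..<N}"
      have nn: "0 \<le> c i b - c i a" using cmono[OF ab(2)] by simp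
      show "norm ((c i b - c i a) *\<^sub>R (f (y i) - v)) \<le> (c i b - c i a) * e"
      proof (cases "c i b = c i a")
        case True then show ?thesis by simp
      next
        case False
        then have "c i a < c i b" using nn by simp
        then have "a - h < real i * h \<and> real i * h < b"
          unfolding c_def using h by (auto simp: min_def max_def split: if_splits)
        then have "norm (f (y i) - v) \<le> e" using hyp \<open>i \<in> {..<N}\<close> by auto
        then show ?thesis using nn by (simp add: mult_left_mono)
      qed
    qed
    also have "\<dots> = e * (b - a)"
      by (metis dsum[OF ab] sum_distrib_right mult.commute)
    finally show ?thesis .
  qed
qed



lemma peano:
  fixes f :: "'a::euclidean_space \<Rightarrow> 'a" and x :: 'a
  assumes uc: "uniformly_continuous_on UNIV f" and bnd: "\<forall>z. norm (f z) \<le> M" and T: "T > 0"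
  obtains g where "g 0 = x"
    "\<And>s t. s \<in> {0..T} \<Longrightarrow> t \<in> {0..T} \<Longrightarrow> norm (g t - g s) \<le> M * \<bar>t - s\<bar>"
    "\<And>t. t \<in> {0..T} \<Longrightarrow> (g has_vector_derivative f (g t)) (at t within {0..T})"
proof -
  define h where "h n = T / real (Suc n)" for n
  define y where "y n j = ((\<lambda>z. z + h n *\<^sub>R f z) ^^ j) x" for n j
  define \<phi> where "\<phi> n t = x + (\<Sum>i<Suc n. max 0 (min (h n) (t - real i * h n)) *\<^sub>R f (y n i))" for n t
  have hpos: "h n > 0" for n using T by (simp add: h_def)
  have NhT: "real (Suc n) * h n = T" for n by (simp add: h_def)
  have yeq: "y n = (\<lambda>j. ((\<lambda>z. z + h n *\<^sub>R f z) ^^ j) x)" for n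
    by (simp add: fun_eq_iff y_def)
  have \<phi>eq: "\<phi> n = (\<lambda>t. x + (\<Sum>i<Suc n. max 0 (min (h n) (t - real i * h n)) *\<^sub>R f (y n i)))" for n
    by (simp add: fun_eq_iff \<phi>_def)
  have M0: "0 \<le> M" using bnd norm_ge_zero order_trans by blast
  have P0: "\<phi> n 0 = x" for n
    using polygon_0[OF bnd hpos[of n] yeq[of n] \<phi>eq[of n]] by simp
  have Pnode: "\<phi> n (real j * h n) = y n j" if "j \<le> Suc n" for n j
    using polygon_node[OF bnd hpos[of n] yeq[of n] \<phi>eq[of n], of j] that by simp
  have Plip: "norm (\<phi> n t - \<phi> n s) \<le> M * (t - s)" if "0 \<le> s" "s \<le> t" "t \<le> T" for n s t
    using polygon_lip[OF bnd hpos[of n] yeq[of n] \<phi>eq[of n], of s t, unfolded NhT] that by simp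
  have Plin: "norm (\<phi> n b - \<phi> n a - (b - a) *\<^sub>R v) \<le> e * (b - a)"
    if "0 \<le> a" "a \<le> b" "b \<le> T"
      "\<forall>i<Suc n. a - h n < real i * h n \<and> real i * h n < b \<longrightarrow> norm (f (y n i) - v) \<le> e" for n a b v e
    using polygon_lin[OF bnd hpos[of n] yeq[of n] \<phi>eq[of n], of a b v e, unfolded NhT] that by simp
  have Plip_abs: "norm (\<phi> n t - \<phi> n s) \<le> M * \<bar>t - s\<bar>" if "s \<in> {0..T}" "t \<in> {0..T}" for n s t
  proof (cases "s \<le> t")
    case True then show ?thesis using Plip[of s t n] that by auto
  next
    case False then show ?thesis using Plip[of t s n] that by (auto simp: norm_minus_commute)
  qed
  have Pclose: "\<exists>\<delta>>0. \<forall>n a b c. h n < \<delta> \<longrightarrow> 0 \<le> a \<longrightarrow> a \<le> c \<longrightarrow> c \<le> b \<longrightarrow> b \<le> T \<longrightarrow> b - a < \<delta> \<longrightarrow>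
      norm (\<phi> n b - \<phi> n a - (b - a) *\<^sub>R f (\<phi> n c)) \<le> \<epsilon> * (b - a)" if "\<epsilon> > 0" for \<epsilon>
  proof -
    obtain d where d: "d > 0" "\<And>z w. dist w z < d \<Longrightarrow> dist (f w) (f z) < \<epsilon>"
      using uc \<open>\<epsilon> > 0\<close> unfolding uniformly_continuous_on_def by blast
    define \<delta> where "\<delta> = d / (2 * (M + 1))"
    have \<delta>: "\<delta> > 0" using d M0 by (simp add: \<delta>_def)
    have d\<delta>: "(M + 1) * (2 * \<delta>) = d" using M0 by (simp add: \<delta>_def field_simps)
    show ?thesis
    proof (intro exI[of _ \<delta>] conjI allI impI \<delta>)
      fix n a b c
      assume hn: "h n < \<delta>" and ab: "0 \<le> a" "a \<le> c" "c \<le> b" "b \<le> T" "b - a < \<delta>"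
      show "norm (\<phi> n b - \<phi> n a - (b - a) *\<^sub>R f (\<phi> n c)) \<le> \<epsilon> * (b - a)"
      proof (rule Plin)
        show "\<forall>i<Suc n. a - h n < real i * h n \<and> real i * h n < b \<longrightarrow> norm (f (y n i) - f (\<phi> n c)) \<le> \<epsilon>"
        proof (intro allI impI)
          fix i assume i: "i < Suc n" "a - h n < real i * h n \<and> real i * h n < b"
          have ih0: "0 \<le> real i * h n" using hpos[of n] by simp
          have yi: "y n i = \<phi> n (real i * h n)" using Pnode[of i n] i by simp
          have "norm (\<phi> n (real i * h n) - \<phi> n c) \<le> M * \<bar>real i * h n - c\<bar>"
            using Plip_abs[of c "real i * h n" n] ih0 i ab by auto
          also have "\<dots> \<le> (M + 1) * \<bar>real i * h n - c\<bar>" by (simp add: mult_right_mono)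
          also have "\<dots> < (M + 1) * (2 * \<delta>)"
            using i ab hn M0 by (intro mult_strict_left_mono) auto
          finally have "dist (y n i) (\<phi> n c) < d" using d\<delta> yi by (simp add: dist_norm)
          then have "dist (f (y n i)) (f (\<phi> n c)) < \<epsilon>" by (rule d(2))
          then show "norm (f (y n i) - f (\<phi> n c)) \<le> \<epsilon>" by (simp add: dist_norm)
        qed
      qed (use ab in auto)
    qed
  qed
  have AAbnd: "norm (\<phi> n t) \<le> norm x + M * T" if "t \<in> {0..T}" for n t
  proof -
    have "norm (\<phi> n t - \<phi> n 0) \<le> M * \<bar>t - 0\<bar>" using Plip_abs[of 0 t n] that by auto
    also have "\<dots> \<le> M * T" using that M0 by (intro mult_left_mono) auto
    finally have "norm (\<phi> n t - x) \<le> M * T" by (simp add: P0)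
    then show ?thesis using norm_triangle_sub[of "\<phi> n t" x] by simp
  qed
  have AAeq: "\<exists>d. 0 < d \<and> (\<forall>n y. y \<in> {0..T} \<and> norm (t - y) < d \<longrightarrow> norm (\<phi> n t - \<phi> n y) < e)"
    if "t \<in> {0..T}" "0 < e" for t e
  proof (intro exI[of _ "e / (M + 1)"] conjI allI impI)
    show "0 < e / (M + 1)" using that M0 by simp
    fix n y assume yy: "y \<in> {0..T} \<and> norm (t - y) < e / (M + 1)"
    have "norm (\<phi> n t - \<phi> n y) \<le> M * \<bar>t - y\<bar>" using Plip_abs[of y t n] yy that by auto
    also have "\<dots> \<le> (M + 1) * \<bar>t - y\<bar>" by (simp add: mult_right_mono)
    also have "\<dots> < e" using yy M0 by (simp add: field_simps)
    finally show "norm (\<phi> n t - \<phi> n y) < e" .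
  qed
  obtain g r where gc: "continuous_on {0..T} g" and r: "strict_mono (r :: nat \<Rightarrow> nat)"
    and unif: "\<And>e. 0 < e \<Longrightarrow> \<exists>N. \<forall>n t. n \<ge> N \<and> t \<in> {0..T} \<longrightarrow> norm (\<phi> (r n) t - g t) < e"
    using Arzela_Ascoli[of "{0..T}" \<phi> "norm x + M * T", OF compact_Icc AAbnd AAeq] by metis
  have pw: "(\<lambda>n. \<phi> (r n) t) \<longlonglongrightarrow> g t" if "t \<in> {0..T}" for t
    unfolding lim_sequentially dist_norm using unif that by meson
  have g0: "g 0 = x"
  proof -
    have "(\<lambda>n. \<phi> (r n) 0) \<longlonglongrightarrow> g 0" using pw T by simp
    then show ?thesis by (simp add: P0 LIMSEQ_const_iff)
  qed
  have glip: "norm (g t - g s) \<le> M * \<bar>t - s\<bar>" if "s \<in> {0..T}" "t \<in> {0..T}" for s t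
  proof (rule LIMSEQ_le_const2)
    show "(\<lambda>n. norm (\<phi> (r n) t - \<phi> (r n) s)) \<longlonglongrightarrow> norm (g t - g s)"
      by (intro tendsto_intros pw that)
    show "\<exists>N. \<forall>n\<ge>N. norm (\<phi> (r n) t - \<phi> (r n) s) \<le> M * \<bar>t - s\<bar>"
      using Plip_abs that by blast
  qed
  have fcont: "isCont f z" for z
    using uniformly_continuous_imp_continuous[OF uc] by (simp add: continuous_on_eq_continuous_at)
  have hsmall: "\<exists>N. \<forall>n\<ge>N. h (r n) < \<delta>" if "\<delta> > 0" for \<delta>
  proof -
    obtain N :: nat where N: "T / \<delta> < real N" using reals_Archimedean2 by blast
    have "h (r n) < \<delta>" if "n \<ge> N" for n
    proof -
      have "n \<le> r n" using r by (rule seq_suble)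
      then have "real N \<le> real (Suc (r n))" using that by simp
      then have "T / \<delta> < real (Suc (r n))" using N by linarith
      then show ?thesis using \<open>\<delta> > 0\<close> by (simp add: h_def field_simps)
    qed
    then show ?thesis by blast
  qed
  have glin: "\<exists>\<delta>>0. \<forall>a b c. 0 \<le> a \<longrightarrow> a \<le> c \<longrightarrow> c \<le> b \<longrightarrow> b \<le> T \<longrightarrow> b - a < \<delta> \<longrightarrow>
      norm (g b - g a - (b - a) *\<^sub>R f (g c)) \<le> \<epsilon> * (b - a)" if eps: "\<epsilon> > 0" for \<epsilon>
  proof -
    obtain \<delta> where \<delta>: "\<delta> > 0" and H: "\<And>n a b c. h n < \<delta> \<Longrightarrow> 0 \<le> a \<Longrightarrow> a \<le> c \<Longrightarrow> c \<le> b \<Longrightarrow> b \<le> T \<Longrightarrow> b - a < \<delta> \<Longrightarrow>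
      norm (\<phi> n b - \<phi> n a - (b - a) *\<^sub>R f (\<phi> n c)) \<le> \<epsilon> * (b - a)"
      using Pclose[OF eps] by blast
    show ?thesis
    proof (intro exI[of _ \<delta>] conjI allI impI \<delta>)
      fix a b c assume ab: "0 \<le> a" "a \<le> c" "c \<le> b" "b \<le> T" "b - a < \<delta>"
      show "norm (g b - g a - (b - a) *\<^sub>R f (g c)) \<le> \<epsilon> * (b - a)"
      proof (rule LIMSEQ_le_const2)
        show "(\<lambda>n. norm (\<phi> (r n) b - \<phi> (r n) a - (b - a) *\<^sub>R f (\<phi> (r n) c))) \<longlonglongrightarrow>
              norm (g b - g a - (b - a) *\<^sub>R f (g c))"
          using ab by (intro tendsto_intros pw isCont_tendsto_compose[OF fcont]) auto
        obtain N where "\<forall>n\<ge>N. h (r n) < \<delta>" using hsmall[OF \<delta>] by blast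
        then show "\<exists>N. \<forall>n\<ge>N. norm (\<phi> (r n) b - \<phi> (r n) a - (b - a) *\<^sub>R f (\<phi> (r n) c)) \<le> \<epsilon> * (b - a)"
          using H ab by blast
      qed
    qed
  qed
  have gder: "(g has_vector_derivative f (g t)) (at t within {0..T})" if t: "t \<in> {0..T}" for t
    unfolding has_vector_derivative_def has_derivative_within_alt
  proof (intro conjI allI impI)
    show "bounded_linear (\<lambda>u. u *\<^sub>R f (g t))" by (rule bounded_linear_scaleR_left)
    fix e :: real assume "e > 0"
    obtain \<delta> where \<delta>: "\<delta> > 0" and H: "\<And>a b c. 0 \<le> a \<Longrightarrow> a \<le> c \<Longrightarrow> c \<le> b \<Longrightarrow> b \<le> T \<Longrightarrow> b - a < \<delta> \<Longrightarrow>
      norm (g b - g a - (b - a) *\<^sub>R f (g c)) \<le> e * (b - a)"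
      using glin[OF \<open>e > 0\<close>] by blast
    show "\<exists>d>0. \<forall>y\<in>{0..T}. norm (y - t) < d \<longrightarrow> norm (g y - g t - (y - t) *\<^sub>R f (g t)) \<le> e * norm (y - t)"
    proof (intro exI[of _ \<delta>] conjI ballI impI \<delta>)
      fix y assume y: "y \<in> {0..T}" and yt: "norm (y - t) < \<delta>"
      show "norm (g y - g t - (y - t) *\<^sub>R f (g t)) \<le> e * norm (y - t)"
      proof (cases "t \<le> y")
        case True
        then show ?thesis using H[of t t y] y t yt by auto
      next
        case False
        have "norm (g t - g y - (t - y) *\<^sub>R f (g t)) \<le> e * (t - y)"
          using H[of y t t] y t yt False by auto
        moreover have "g y - g t - (y - t) *\<^sub>R f (g t) = - (g t - g y - (t - y) *\<^sub>R f (g t))"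
          by (simp add: algebra_simps)
        ultimately show ?thesis using False by (simp only: norm_minus_cancel) auto
      qed
    qed
  qed
  show ?thesis using that g0 glip gder by blast
qed



lemma sel_continuous:
  fixes F :: "'a::euclidean_space \<Rightarrow> 'b::euclidean_space set"
  assumes F_cont: "continuous_set_valued_map F"
    and F_ne: "\<And>x. F x \<noteq> {}"
    and F_compact: "\<And>x. compact (F x)"
    and F_convex: "\<And>x. convex (F x)"
  shows "continuous_on UNIV (\<lambda>y. closest_point (F y) \<eta>)"
  unfolding continuous_on_iff
proof (intro ballI allI impI)
  fix y0 :: 'a and \<epsilon> :: real assume "y0 \<in> UNIV" and \<epsilon>: "\<epsilon> > 0"
  have cl: "closed (F y)" for y using F_compact compact_imp_closed by blast
  define p0 where "p0 = closest_point (F y0) \<eta>"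
  define d0 where "d0 = dist \<eta> p0"
  have d0: "d0 \<ge> 0" by (simp add: d0_def)
  have p0F: "p0 \<in> F y0" unfolding p0_def by (rule closest_point_in_set[OF cl F_ne])
  define \<delta>' where "\<delta>' = min (\<epsilon> / 2) (min 1 (\<epsilon>^2 / (16 * (d0 + 1))))"
  have \<delta>'0: "\<delta>' > 0" using \<epsilon> d0 by (simp add: \<delta>'_def)
  have \<delta>'1: "\<delta>' \<le> \<epsilon> / 2" "\<delta>' \<le> 1" "\<delta>' \<le> \<epsilon>^2 / (16 * (d0 + 1))" unfolding \<delta>'_def by (rule min.cobounded1, rule min.coboundedI2, simp, rule min.coboundedI2, simp)
  obtain d1 where d1: "d1 > 0" "\<And>y. dist y y0 < d1 \<Longrightarrow> F y \<inter> ball p0 \<delta>' \<noteq> {}"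
    using F_cont p0F \<delta>'0 unfolding continuous_set_valued_map_def lower_semicontinuous_map_def
    by (metis centre_in_ball disjoint_iff open_ball)
  have openU: "open (\<Union>w\<in>F y0. ball w \<delta>')" by (intro open_UN) auto
  have subU: "F y0 \<subseteq> (\<Union>w\<in>F y0. ball w \<delta>')" using \<delta>'0 by auto
  obtain d2 where d2: "d2 > 0" "\<And>y. dist y y0 < d2 \<Longrightarrow> F y \<subseteq> (\<Union>w\<in>F y0. ball w \<delta>')"
    using F_cont openU subU unfolding continuous_set_valued_map_def upper_semicontinuous_map_def
    by meson
  show "\<exists>d>0. \<forall>y\<in>UNIV. dist y y0 < d \<longrightarrow> dist (closest_point (F y) \<eta>) (closest_point (F y0) \<eta>) < \<epsilon>"
  proof (intro exI[of _ "min d1 d2"] conjI ballI impI)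
    show "0 < min d1 d2" using d1 d2 by simp
    fix y assume "y \<in> UNIV" "dist y y0 < min d1 d2"
    then have yd1: "dist y y0 < d1" and yd2: "dist y y0 < d2" by auto
    define p where "p = closest_point (F y) \<eta>"
    have pF: "p \<in> F y" unfolding p_def by (rule closest_point_in_set[OF cl F_ne])
    obtain q where q: "q \<in> F y" "dist p0 q < \<delta>'" using d1(2)[OF yd1] by auto
    obtain w where w: "w \<in> F y0" "dist w p < \<delta>'" using d2(2)[OF yd2] pF by auto
    have "dist \<eta> p \<le> dist \<eta> q" unfolding p_def by (rule closest_point_le[OF cl q(1)])
    also have "\<dots> \<le> dist \<eta> p0 + dist p0 q" by (rule dist_triangle)
    finally have "dist \<eta> p < d0 + \<delta>'" using q(2) by (simp add: d0_def)
    then have etaw: "dist \<eta> w < d0 + 2 * \<delta>'"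
      using dist_triangle[of \<eta> w p] w(2) by (simp add: dist_commute)
    have dot: "inner (\<eta> - p0) (w - p0) \<le> 0"
      unfolding p0_def by (rule closest_point_dot[OF F_convex cl w(1)])
    have id: "(norm (\<eta> - w))^2 = (norm (\<eta> - p0))^2 - 2 * inner (\<eta> - p0) (w - p0) + (norm (w - p0))^2"
    proof -
      have "\<eta> - w = (\<eta> - p0) - (w - p0)" by simp
      then show ?thesis
        by (simp only: power2_norm_eq_inner inner_diff_left inner_diff_right inner_commute) (simp add: inner_commute algebra_simps)
    qed
    have "(norm (\<eta> - w))^2 < (d0 + 2 * \<delta>')^2"
      using etaw by (intro power_strict_mono) (auto simp: dist_norm)
    then have "(norm (w - p0))^2 < (d0 + 2 * \<delta>')^2 - d0^2"
      using id dot by (simp add: d0_def dist_norm)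
    also have "\<dots> = 4 * \<delta>' * (d0 + \<delta>')" by (simp add: power2_eq_square algebra_simps)
    also have "\<dots> \<le> 4 * \<delta>' * (d0 + 1)" using \<delta>'1 \<delta>'0 by (intro mult_left_mono) auto
    also have "\<dots> \<le> 4 * (\<epsilon>^2 / (16 * (d0 + 1))) * (d0 + 1)"
      using \<delta>'1 d0 by (intro mult_right_mono) auto
    also have "\<dots> = (\<epsilon> / 2)^2" using d0 by (simp add: power2_eq_square field_simps)
    finally have sq: "(norm (w - p0))^2 < (\<epsilon> / 2)^2" .
    have wp0: "norm (w - p0) \<le> \<epsilon> / 2"
      by (rule power2_le_imp_le[OF less_imp_le[OF sq]]) (use \<epsilon> in simp)
    have "dist p p0 \<le> dist p w + dist w p0" by (rule dist_triangle)
    also have "dist p w < \<delta>'" using w(2) by (simp add: dist_commute)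
    also have "dist w p0 = norm (w - p0)" by (simp add: dist_norm)
    finally have "dist p p0 < \<epsilon>" using wp0 \<delta>'1(1) by linarith
    then show "dist (closest_point (F y) \<eta>) (closest_point (F y0) \<eta>) < \<epsilon>"
      by (simp add: p_def p0_def)
  qed
qed



theorem lemma17:
  fixes F :: "real^'n \<Rightarrow> (real^'n) set"
    and Om :: "(real^'n) set"
    and B :: "real^'n \<Rightarrow> real"
    and gradB :: "real^'n \<Rightarrow> real^'n"
  assumes F_cont: "continuous_set_valued_map F"
    and F_ne: "\<And>x. F x \<noteq> {}"
    and F_compact: "\<And>x. compact (F x)"
    and F_convex: "\<And>x. convex (F x)"
    and O_open: "open Om"
    and B_deriv: "\<And>x. (B has_derivative (\<lambda>h. gradB x \<bullet> h)) (at x)"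
    and gradB_cont: "continuous_on UNIV gradB"
    and mono: "\<And>I \<phi>. is_solution F I \<phi> \<Longrightarrow> \<phi> ` I \<subseteq> Om \<Longrightarrow>
                 (\<forall>s\<in>I. \<forall>t\<in>I. s \<le> t \<longrightarrow> B (\<phi> t) \<le> B (\<phi> s))"
  shows "\<forall>x\<in>Om. \<forall>\<eta>\<in>F x. gradB x \<bullet> \<eta> \<le> 0"
proof (rule ccontr)
  assume "\<not> ?thesis"
  then obtain x \<eta> where xO: "x \<in> Om" and \<eta>F: "\<eta> \<in> F x" and pos: "gradB x \<bullet> \<eta> > 0"
    by (auto simp: not_le)
  have cl: "closed (F y)" for y using F_compact compact_imp_closed by blast
  define sel where "sel y = closest_point (F y) \<eta>" for y
  have selc: "continuous_on UNIV sel"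
    unfolding sel_def by (rule sel_continuous[OF F_cont F_ne F_compact F_convex])
  have selF: "sel y \<in> F y" for y unfolding sel_def by (rule closest_point_in_set[OF cl F_ne])
  have selx: "sel x = \<eta>" unfolding sel_def by (rule closest_point_self[OF \<eta>F])
  define q where "q y = gradB y \<bullet> sel y" for y
  have qc: "continuous_on UNIV q" unfolding q_def by (intro continuous_on_inner gradB_cont selc)
  have qx: "q x > 0" using pos selx by (simp add: q_def)
  obtain e1 where e1: "e1 > 0" "\<And>z. dist z x < e1 \<Longrightarrow> dist (q z) (q x) < q x"
    using qc qx unfolding continuous_on_iff by blast
  obtain e2 where e2: "e2 > 0" "ball x e2 \<subseteq> Om" using O_open xO open_contains_ball by blast
  define r where "r = min e1 e2 / 2"
  have r0: "r > 0" using e1 e2 by (simp add: r_def)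
  have cballO: "cball x r \<subseteq> Om" using e2 r0 by (auto simp: r_def dist_commute)
  have qpos: "q z > 0" if "z \<in> cball x r" for z
  proof -
    have "dist z x < e1" using that r0 e1 by (auto simp: r_def dist_commute)
    then have "dist (q z) (q x) < q x" by (rule e1(2))
    then show ?thesis by (auto simp: dist_real_def)
  qed
  define P where "P z = closest_point (cball x r) z" for z
  have Pin: "P z \<in> cball x r" for z unfolding P_def using r0 by (intro closest_point_in_set) auto
  have Pid: "P z = z" if "z \<in> cball x r" for z unfolding P_def by (rule closest_point_self[OF that])
  have Puc: "uniformly_continuous_on UNIV P"
    unfolding uniformly_continuous_on_def
  proof (intro allI impI)
    fix e :: real assume "e > 0"
    show "\<exists>d>0. \<forall>z\<in>UNIV. \<forall>z'\<in>UNIV. dist z' z < d \<longrightarrow> dist (P z') (P z) < e"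
      using \<open>e > 0\<close> closest_point_lipschitz[of "cball x r"] r0
      by (intro exI[of _ e]) (auto simp: P_def intro: le_less_trans)
  qed
  define f where "f z = sel (P z)" for z
  have fuc: "uniformly_continuous_on UNIV f"
  proof -
    have "uniformly_continuous_on (cball x r) sel"
      by (rule compact_uniformly_continuous[OF continuous_on_subset[OF selc]]) auto
    moreover have "P ` UNIV \<subseteq> cball x r" using Pin by auto
    ultimately have "uniformly_continuous_on (P ` UNIV) sel"
      unfolding uniformly_continuous_on_def by (meson subsetD)
    then show ?thesis unfolding f_def by (rule uniformly_continuous_on_compose[OF Puc])
  qed
  have "compact (sel ` cball x r)"
    by (rule compact_continuous_image[OF continuous_on_subset[OF selc]]) auto
  then obtain M0 where M0: "\<forall>v\<in>sel ` cball x r. norm v \<le> M0"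
    using compact_imp_bounded bounded_iff by blast
  define M where "M = max M0 0"
  have Mnn: "M \<ge> 0" by (simp add: M_def)
  have fb: "\<forall>z. norm (f z) \<le> M"
  proof
    fix z
    have "norm (sel (P z)) \<le> M0" using M0 Pin[of z] by blast
    then show "norm (f z) \<le> M" by (simp add: f_def M_def)
  qed
  define T where "T = r / (M + 1)"
  have T0: "T > 0" using r0 Mnn by (simp add: T_def)
  have MT: "M * T \<le> r" using r0 Mnn by (simp add: T_def field_simps)
  obtain g where g0: "g 0 = x"
    and glip: "\<And>s t. s \<in> {0..T} \<Longrightarrow> t \<in> {0..T} \<Longrightarrow> norm (g t - g s) \<le> M * \<bar>t - s\<bar>"
    and gder: "\<And>t. t \<in> {0..T} \<Longrightarrow> (g has_vector_derivative f (g t)) (at t within {0..T})"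
    using peano[OF fuc fb T0, of x] by blast
  have gin: "g t \<in> cball x r" if "t \<in> {0..T}" for t
  proof -
    have "norm (g t - g 0) \<le> M * \<bar>t - 0\<bar>" using glip[of 0 t] that T0 by auto
    also have "\<dots> \<le> M * T" using that Mnn by (intro mult_left_mono) auto
    finally show ?thesis using MT g0 by (simp add: dist_norm norm_minus_commute)
  qed
  have fg: "f (g t) = sel (g t)" if "t \<in> {0..T}" for t using Pid[OF gin[OF that]] by (simp add: f_def)
  have gder_at: "(g has_vector_derivative sel (g t)) (at t)" if "0 < t" "t < T" for t
    using gder[of t] fg[of t] that by (simp add: at_within_Icc_at)
  have sol: "is_solution F {0..T} g"
    unfolding is_solution_def
  proof (intro conjI)
    show "is_interval {0..T}" by (rule is_interval_cc)
    show "0 \<in> {0..T}" using T0 by simp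
    show "locally_absolutely_continuous_on {0..T} g"
      unfolding locally_absolutely_continuous_on_def absolutely_continuous_on_def
    proof (intro allI impI)
      fix a b e :: real assume ab: "{a..b} \<subseteq> {0..T}" and e: "0 < e"
      show "\<exists>d>0. \<forall>D. finite D \<and> (\<forall>(u, v)\<in>D. u \<le> v \<and> {u..v} \<subseteq> {a..b}) \<and>
            (\<forall>p\<in>D. \<forall>q\<in>D. p \<noteq> q \<longrightarrow> {fst p<..<snd p} \<inter> {fst q<..<snd q} = {}) \<and>
            (\<Sum>(u, v)\<in>D. v - u) < d \<longrightarrow> (\<Sum>(u, v)\<in>D. norm (g v - g u)) < e"
      proof (intro exI[of _ "e / (M + 1)"] conjI allI impI)
        show "0 < e / (M + 1)" using e Mnn by simp
        fix D :: "(real \<times> real) set"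
        assume D: "finite D \<and> (\<forall>(u, v)\<in>D. u \<le> v \<and> {u..v} \<subseteq> {a..b}) \<and>
            (\<forall>p\<in>D. \<forall>q\<in>D. p \<noteq> q \<longrightarrow> {fst p<..<snd p} \<inter> {fst q<..<snd q} = {}) \<and>
            (\<Sum>(u, v)\<in>D. v - u) < e / (M + 1)"
        have "(\<Sum>(u, v)\<in>D. norm (g v - g u)) \<le> (\<Sum>(u, v)\<in>D. (M + 1) * (v - u))"
        proof (rule sum_mono)
          fix p assume pD: "p \<in> D"
          obtain u v where p: "p = (u, v)" by fastforce
          have uv: "u \<le> v" "{u..v} \<subseteq> {a..b}" using D pD p by auto
          then have "u \<in> {0..T}" "v \<in> {0..T}" using ab by auto
          then have "norm (g v - g u) \<le> M * \<bar>v - u\<bar>" by (rule glip)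
          also have "\<dots> \<le> (M + 1) * (v - u)" using uv by (simp add: mult_right_mono)
          finally show "(case p of (u, v) \<Rightarrow> norm (g v - g u)) \<le> (case p of (u, v) \<Rightarrow> (M + 1) * (v - u))"
            by (simp add: p)
        qed
        also have "\<dots> = (M + 1) * (\<Sum>(u, v)\<in>D. v - u)"
          by (simp add: sum_distrib_left case_prod_unfold)
        also have "\<dots> < (M + 1) * (e / (M + 1))"
          using D Mnn by (intro mult_strict_left_mono) auto
        also have "\<dots> = e" using Mnn by simp
        finally show "(\<Sum>(u, v)\<in>D. norm (g v - g u)) < e" .
      qed
    qed
    show "AE t in lebesgue. t \<in> {0..T} \<longrightarrow> (\<exists>v. (g has_vector_derivative v) (at t) \<and> v \<in> F (g t))"
    proof (rule AE_I'[of "{0, T}"])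
      show "{0, T} \<in> null_sets lebesgue" by simp
      show "{t \<in> space lebesgue. \<not> (t \<in> {0..T} \<longrightarrow> (\<exists>v. (g has_vector_derivative v) (at t) \<and> v \<in> F (g t)))} \<subseteq> {0, T}"
      proof
        fix t assume "t \<in> {t \<in> space lebesgue. \<not> (t \<in> {0..T} \<longrightarrow> (\<exists>v. (g has_vector_derivative v) (at t) \<and> v \<in> F (g t)))}"
        then have t: "t \<in> {0..T}" and nd: "\<not> (\<exists>v. (g has_vector_derivative v) (at t) \<and> v \<in> F (g t))" by auto
        show "t \<in> {0, T}"
        proof (rule ccontr)
          assume "t \<notin> {0, T}"
          then have "0 < t" "t < T" using t by auto
          then show False using nd gder_at selF by blast
        qed
      qed
    qed
  qed
  have gO: "g ` {0..T} \<subseteq> Om" using gin cballO by auto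
  have "B (g T) \<le> B (g 0)" using mono[OF sol gO] T0 by auto
  moreover have "B (g T) > B (g 0)"
  proof -
    have gcont: "continuous_on {0..T} g"
      unfolding continuous_on_eq_continuous_within
      using gder has_vector_derivative_continuous by blast
    have Bcont: "continuous_on UNIV B"
      using B_deriv by (auto simp: continuous_on_eq_continuous_at intro: has_derivative_continuous)
    have cBg: "continuous_on {0..T} (B \<circ> g)"
      by (rule continuous_on_compose[OF gcont continuous_on_subset[OF Bcont]]) auto
    have dBg: "((B \<circ> g) has_derivative (\<lambda>s. gradB (g t) \<bullet> (s *\<^sub>R sel (g t)))) (at t)"
      if "0 < t" "t < T" for t
    proof -
      have "(g has_derivative (\<lambda>s. s *\<^sub>R sel (g t))) (at t)"
        using gder_at[OF that] by (simp add: has_vector_derivative_def)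
      from has_derivative_compose[OF this B_deriv] show ?thesis by (simp add: o_def)
    qed
    obtain \<xi> where \<xi>: "0 < \<xi>" "\<xi> < T"
      and eq: "(B \<circ> g) T - (B \<circ> g) 0 = gradB (g \<xi>) \<bullet> ((T - 0) *\<^sub>R sel (g \<xi>))"
      using mvt[OF T0 cBg dBg] by blast
    have "q (g \<xi>) > 0" using qpos gin \<xi> by auto
    then have "gradB (g \<xi>) \<bullet> ((T - 0) *\<^sub>R sel (g \<xi>)) > 0"
      using T0 by (simp add: q_def)
    then show ?thesis using eq by simp
  qed
  ultimately show False by simp
qed


end
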